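(* Let $a\in\mathbb{R}$ and $\theta\in(0,\pi)$, with $\theta\neq\cos^{-1}\!\left(-\frac{1}{2\sqrt a}\right)$ whenever $a>1/4$. Let \[ \zeta=\zeta(\theta)=\frac{(2a-1)\cos\theta+\sqrt{(1-4a)\cos^2\theta+a}}{1-4a\cos^2\theta},\qquad z(\theta)=\frac{a\zeta}{(2\cos\theta+\zeta)(1+2\zeta\cos\theta)}. \] Then the zeros in $t$ of $1+t+at^2+z(\theta)t^3$ are \[ t_0=-\frac{e^{2i\theta}+\zeta e^{i\theta}+\zeta e^{3i\theta}}{\zeta e^{3i\theta}},\qquad t_1=t_0e^{2i\theta},\qquad t_2=\zeta e^{i\theta}t_0. \]
   Context: The square root denotes the principal square root (it may be non-real if the radicand is negative); the statement concerns those $\theta$ for which $\zeta(\theta)$ and $z(\theta)$ are defined (nonzero denominators). *)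

theory Defs
  imports Complex_Main
begin

definition zeta :: "real \<Rightarrow> real \<Rightarrow> complex" where
  "zeta a \<theta> =
     (complex_of_real ((2*a - 1) * cos \<theta>) + csqrt (complex_of_real ((1 - 4*a) * (cos \<theta>)^2 + a)))
     / complex_of_real (1 - 4*a*(cos \<theta>)^2)"

definition zfun :: "real \<Rightarrow> real \<Rightarrow> complex" where
  "zfun a \<theta> =
     (complex_of_real a * zeta a \<theta>) /
     ((complex_of_real (2 * cos \<theta>) + zeta a \<theta>) * (1 + 2 * zeta a \<theta> * complex_of_real (cos \<theta>)))"

end

theory Submission
  imports Defs
begin

lemma cw_lem: "2 * complex_of_real (cos th) * exp (\<i> * complex_of_real th) = (exp (\<i> * complex_of_real th))^2 + 1"
proof -
  have "exp (\<i> * complex_of_real th) = Complex (cos th) (sin th)"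
    by (simp add: exp_eq_polar cis.ctr mult.commute)
  moreover have "cos th * cos th = 1 - sin th * sin th" using sin_cos_squared_add3[of th] by linarith
  ultimately show ?thesis by (simp add: complex_eq_iff power2_eq_square cos_double sin_double)
qed

lemma core0:
  fixes w Z t N :: complex
  assumes w: "w \<noteq> 0" and Z: "Z \<noteq> 0" and N: "N = w + Z*w^2 + Z" and Nn: "N \<noteq> 0"
  shows "1 + t + (Z*w*(Z*w+w^2+1)/N^2)*t^2 + (Z^2*w^3/N^3)*t^3 = (Z^2*w^3/N^3)*(t - (-(w^2+Z*w+Z*w^3)/(Z*w^3)))*(t - (-(w^2+Z*w+Z*w^3)/(Z*w^3))*w^2)*(t - Z*w*(-(w^2+Z*w+Z*w^3)/(Z*w^3)))"
proof -
  have "N^3*Z^2*w^6 * (1 + t + (Z*w*(Z*w+w^2+1)/N^2)*t^2 + (Z^2*w^3/N^3)*t^3) = N^3*Z^2*w^6 * ((Z^2*w^3/N^3)*(t - (-(w^2+Z*w+Z*w^3)/(Z*w^3)))*(t - (-(w^2+Z*w+Z*w^3)/(Z*w^3))*w^2)*(t - Z*w*(-(w^2+Z*w+Z*w^3)/(Z*w^3))))"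
    using w Z Nn unfolding N by (simp add: field_simps) algebra
  moreover have "N^3*Z^2*w^6 \<noteq> 0" using w Z Nn by simp
  ultimately show ?thesis by (metis mult_left_cancel)
qed

lemma core1:
  fixes w Z c a z t :: complex
  assumes w: "w \<noteq> 0" and Z: "Z \<noteq> 0" and D: "1 + 2*c*Z \<noteq> 0"
    and cw: "2*c*w = w^2 + 1" and ha: "a*(1+2*c*Z)^2 = Z*(Z+2*c)" and hz: "z*(1+2*c*Z)^3 = Z^2"
  shows "1 + t + a*t^2 + z*t^3 = z*(t - (-(w^2+Z*w+Z*w^3)/(Z*w^3)))*(t - (-(w^2+Z*w+Z*w^3)/(Z*w^3))*w^2)*(t - Z*w*(-(w^2+Z*w+Z*w^3)/(Z*w^3)))"
proof -
  define N where "N = w + Z*w^2 + Z"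
  have ND: "N = w * (1 + 2*c*Z)" unfolding N_def using cw
    by (simp add: algebra_simps)
  have Nn: "N \<noteq> 0" using ND w D by simp
  have a: "a = Z*w*(Z*w+w^2+1)/N^2"
  proof -
    have "a * N^2 = Z*w*(Z*w+2*c*w)" unfolding ND using ha
      by (simp add: power_mult_distrib) (metis (no_types, lifting) distrib_left mult.assoc mult.commute power2_eq_square)
    also have "\<dots> = Z*w*(Z*w+w^2+1)" using cw by (simp add: mult.commute)
    finally show ?thesis using Nn by (simp add: field_simps)
  qed
  have zz: "z = Z^2*w^3/N^3"
  proof -
    have "z * N^3 = Z^2*w^3" unfolding ND using hz by (simp add: power_mult_distrib)
    thus ?thesis using Nn by (simp add: field_simps)
  qed
  show ?thesis unfolding a zz using core0[OF w Z N_def Nn] .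
qed

theorem lemma2p7:
  fixes a \<theta> :: real
  assumes "0 < \<theta>" and "\<theta> < pi"
    and "a > 1/4 \<Longrightarrow> \<theta> \<noteq> arccos (- 1 / (2 * sqrt a))"
    and "1 - 4*a*(cos \<theta>)^2 \<noteq> 0"
    and "(complex_of_real (2 * cos \<theta>) + zeta a \<theta>) * (1 + 2 * zeta a \<theta> * complex_of_real (cos \<theta>)) \<noteq> 0"
    and "zeta a \<theta> * exp (3 * \<i> * complex_of_real \<theta>) \<noteq> 0"
  defines "t0 \<equiv> - (exp (2 * \<i> * complex_of_real \<theta>) + zeta a \<theta> * exp (\<i> * complex_of_real \<theta>)
                   + zeta a \<theta> * exp (3 * \<i> * complex_of_real \<theta>))
                 / (zeta a \<theta> * exp (3 * \<i> * complex_of_real \<theta>))"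
  shows "\<forall>t::complex. 1 + t + complex_of_real a * t^2 + zfun a \<theta> * t^3
           = zfun a \<theta> * (t - t0) * (t - t0 * exp (2 * \<i> * complex_of_real \<theta>))
               * (t - zeta a \<theta> * exp (\<i> * complex_of_real \<theta>) * t0)"
proof
  fix t :: complex
  define w where "w = exp (\<i> * complex_of_real \<theta>)"
  define Z where "Z = zeta a \<theta>"
  define c where "c = complex_of_real (cos \<theta>)"
  define A where "A = complex_of_real (1 - 4*a*(cos \<theta>)^2)"
  define B where "B = complex_of_real ((2*a - 1) * cos \<theta>)"
  define S where "S = csqrt (complex_of_real ((1 - 4*a) * (cos \<theta>)^2 + a))"
  have w: "w \<noteq> 0" unfolding w_def by simp
  have w2: "exp (2 * \<i> * complex_of_real \<theta>) = w^2" unfolding w_def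
    by (metis exp_of_nat_mult of_nat_numeral mult.assoc)
  have w3: "exp (3 * \<i> * complex_of_real \<theta>) = w^3" unfolding w_def
    by (metis exp_of_nat_mult of_nat_numeral mult.assoc)
  have Z: "Z \<noteq> 0" using assms(6) unfolding Z_def by simp
  have An: "A \<noteq> 0" using assms(4) unfolding A_def by (metis of_real_eq_0_iff)
  have D: "1 + 2*c*Z \<noteq> 0" using assms(5) unfolding Z_def c_def by (simp add: mult.commute mult.left_commute)
  have D2: "2*c + Z \<noteq> 0" using assms(5) unfolding Z_def c_def by simp
  have cw: "2*c*w = w^2 + 1" unfolding c_def w_def by (rule cw_lem)
  have ZA: "Z * A = B + S" unfolding Z_def zeta_def A_def B_def S_def using An A_def by simp
  have SS: "S^2 = complex_of_real ((1 - 4*a) * (cos \<theta>)^2 + a)" unfolding S_def by simp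
  have "A * (Z*(Z+2*c) - complex_of_real a*(1+2*c*Z)^2) = (Z*A - B)^2 - S^2"
    unfolding SS A_def B_def c_def by (simp add: algebra_simps power2_eq_square)
  also have "\<dots> = 0" using ZA by simp
  finally have ha: "complex_of_real a*(1+2*c*Z)^2 = Z*(Z+2*c)" using An by simp
  have zf: "zfun a \<theta> = complex_of_real a * Z / ((2*c + Z) * (1 + 2*c*Z))"
    unfolding zfun_def Z_def c_def by (simp add: mult.commute mult.left_commute)
  have hz: "zfun a \<theta> * (1+2*c*Z)^3 = Z^2"
  proof -
    have e1: "zfun a \<theta> * ((2*c + Z) * (1 + 2*c*Z)) = complex_of_real a * Z"
      unfolding zf using D D2 by simp
    have "(zfun a \<theta> * (1+2*c*Z)^3) * (2*c+Z) = (zfun a \<theta> * ((2*c + Z) * (1 + 2*c*Z))) * (1+2*c*Z)^2"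
      by (simp add: algebra_simps power2_eq_square power3_eq_cube)
    also have "\<dots> = Z * (complex_of_real a*(1+2*c*Z)^2)" unfolding e1 by (simp add: algebra_simps)
    also have "\<dots> = Z^2 * (2*c+Z)" unfolding ha by (simp add: algebra_simps power2_eq_square)
    finally show ?thesis using D2 by simp
  qed
  have t0: "t0 = -(w^2+Z*w+Z*w^3)/(Z*w^3)" unfolding t0_def w2 w3 Z_def w_def by simp
  show "1 + t + complex_of_real a * t^2 + zfun a \<theta> * t^3
           = zfun a \<theta> * (t - t0) * (t - t0 * exp (2 * \<i> * complex_of_real \<theta>))
               * (t - zeta a \<theta> * exp (\<i> * complex_of_real \<theta>) * t0)"
    unfolding w2 t0 using core1[OF w Z D cw ha hz, of t] unfolding Z_def w_def by simp
qed

end
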